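(* Let $L$ be a slim semimodular lattice of length $n$ and let $D$ be a planar diagram of $L$ with left boundary chain $0=c_0\prec\dots\prec c_n=1$ and right boundary chain $0=d_0\prec\dots\prec d_n=1$. Let $\pi_1,\pi_2,\pi_3$ be the permutations associated with $D$ as defined below. Then $\pi_1=\pi_2=\pi_3$.
   Context: A finite lattice is slim if its join-irreducible elements (including $0$) contain no three-element antichain; semimodular means $a\prec b$ implies $a\vee c\preceq b\vee c$. Slim lattices are planar; in a planar diagram of a slim semimodular lattice all cells (minimal regions bounded by edges) are 4-cells, i.e. four-element cover-preserving sublattices of length 2. Diagrams are considered up to boundary similarity (an isomorphism preserving left and right boundary chains). $\pi_1$: for $i\in\{1,\dots,n\}$ let $I_0=[c_{i-1},c_i]$; if $I_t$ is defined and is the left-hand (lower or upper) edge of a 4-cell lying to its right, let $I_{t+1}$ be the opposite edge of that 4-cell; the sequence $I_0,\dots,I_m$ (the trajectory) ends on the right boundary chain at $I_m=[d_{j-1},d_j]$, and $\pi_1(i)=j$ (this is known to be well defined and a permutation). $\pi_2$: for $i\in\{1,\dots,n\}$ take a meet-irreducible $u\in L$, $u\neq1$, such that $c_i$ is the smallest element of the left boundary chain not $\le u$; let $d_j$ be the smallest element of the right boundary chain not $\le u$; $\pi_2(i)=j$. $\pi_3$: let $G$ be the direct product of the chains $\{c_0,\dots,c_n\}$ and $\{d_0,\dots,d_n\}$, writing $c_i\vee d_j$ for the pair $(c_i,d_j)$; let $\eta\colon G\to L$, $c_i\vee_G d_j\mapsto c_i\vee_L d_j$, and let $\beta_D$ be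 the kernel of $\eta$. For a join-congruence $\alpha$ of $G$ and $i,j\ge1$, the 4-cell $\{c_{i-1}\vee d_{j-1},c_{i-1}\vee d_j,c_i\vee d_{j-1},c_i\vee d_j\}$ is a source cell of $\alpha$ if $c_{i-1}\vee d_j$, $c_i\vee d_{j-1}$, $c_i\vee d_j$ lie in one $\alpha$-class not containing $c_{i-1}\vee d_{j-1}$. $\pi_3(i)=j$ iff the 4-cell with top $c_i\vee d_j$ is a source cell of $\beta_D$. *)

theory Defs
  imports Main
begin

text \<open>The lattice L is the whole (finite, hence bounded) type 'a.\<close>

definition covers :: "'a::order \<Rightarrow> 'a \<Rightarrow> bool" where
  "covers x y \<longleftrightarrow> x < y \<and> \<not> (\<exists>z. x < z \<and> z < y)"

definition covers_or_eq :: "'a::order \<Rightarrow> 'a \<Rightarrow> bool" where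
  "covers_or_eq x y \<longleftrightarrow> covers x y \<or> x = y"

text \<open>Join-irreducible elements, with 0 included (as in the slimness definition).\<close>
definition join_irreducible :: "'a::lattice \<Rightarrow> bool" where
  "join_irreducible x \<longleftrightarrow> (\<forall>a b. x = sup a b \<longrightarrow> x = a \<or> x = b)"

definition meet_irreducible :: "'a::lattice \<Rightarrow> bool" where
  "meet_irreducible x \<longleftrightarrow> (\<forall>a b. x = inf a b \<longrightarrow> x = a \<or> x = b)"

definition slim_lattice :: "'a::lattice itself \<Rightarrow> bool" where
  "slim_lattice _ \<longleftrightarrow> \<not> (\<exists>x y z :: 'a. join_irreducible x \<and> join_irreducible y \<and> join_irreducible z
      \<and> \<not> x \<le> y \<and> \<not> y \<le> x \<and> \<not> x \<le> z \<and> \<not> z \<le> x \<and> \<not> y \<le> z \<and> \<not> z \<le> y)"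

definition semimodular_lattice :: "'a::lattice itself \<Rightarrow> bool" where
  "semimodular_lattice _ \<longleftrightarrow> (\<forall>a b c :: 'a. covers a b \<longrightarrow> covers_or_eq (sup a c) (sup b c))"

definition is_chain :: "'a::order set \<Rightarrow> bool" where
  "is_chain C \<longleftrightarrow> (\<forall>x\<in>C. \<forall>y\<in>C. x \<le> y \<or> y \<le> x)"

definition lattice_length :: "'a::{finite,order} itself \<Rightarrow> nat \<Rightarrow> bool" where
  "lattice_length _ n \<longleftrightarrow> (\<exists>C :: 'a set. is_chain C \<and> card C = n + 1)
      \<and> (\<forall>C :: 'a set. is_chain C \<longrightarrow> card C \<le> n + 1)"

text \<open>A planar diagram, up to similarity, is encoded by its two conjugate linear orders
  (a 2-dimensional realizer, Kelly--Rival / Baker--Fishburn--Roberts):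
  r1, r2 are linear orders whose intersection is the lattice order.
  x is strictly to the left of y iff x comes before y in r1 and after y in r2.\<close>
definition linear_rel :: "('a \<Rightarrow> 'a \<Rightarrow> bool) \<Rightarrow> bool" where
  "linear_rel r \<longleftrightarrow> (\<forall>x. r x x) \<and> (\<forall>x y. r x y \<and> r y x \<longrightarrow> x = y)
      \<and> (\<forall>x y z. r x y \<and> r y z \<longrightarrow> r x z) \<and> (\<forall>x y. r x y \<or> r y x)"

definition planar_diagram :: "('a::order \<Rightarrow> 'a \<Rightarrow> bool) \<Rightarrow> ('a \<Rightarrow> 'a \<Rightarrow> bool) \<Rightarrow> bool" where
  "planar_diagram r1 r2 \<longleftrightarrow> linear_rel r1 \<and> linear_rel r2 \<and> (\<forall>x y. x \<le> y \<longleftrightarrow> r1 x y \<and> r2 x y)"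

definition left_of :: "('a \<Rightarrow> 'a \<Rightarrow> bool) \<Rightarrow> ('a \<Rightarrow> 'a \<Rightarrow> bool) \<Rightarrow> 'a \<Rightarrow> 'a \<Rightarrow> bool" where
  "left_of r1 r2 x y \<longleftrightarrow> x \<noteq> y \<and> r1 x y \<and> r2 y x"

definition left_boundary_chain ::
  "('a::bounded_lattice \<Rightarrow> 'a \<Rightarrow> bool) \<Rightarrow> ('a \<Rightarrow> 'a \<Rightarrow> bool) \<Rightarrow> nat \<Rightarrow> (nat \<Rightarrow> 'a) \<Rightarrow> bool" where
  "left_boundary_chain r1 r2 n c \<longleftrightarrow> c 0 = bot \<and> c n = top \<and> (\<forall>i<n. covers (c i) (c (Suc i)))
      \<and> (\<forall>i\<le>n. \<forall>y. \<not> left_of r1 r2 y (c i))"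

definition right_boundary_chain ::
  "('a::bounded_lattice \<Rightarrow> 'a \<Rightarrow> bool) \<Rightarrow> ('a \<Rightarrow> 'a \<Rightarrow> bool) \<Rightarrow> nat \<Rightarrow> (nat \<Rightarrow> 'a) \<Rightarrow> bool" where
  "right_boundary_chain r1 r2 n d \<longleftrightarrow> d 0 = bot \<and> d n = top \<and> (\<forall>i<n. covers (d i) (d (Suc i)))
      \<and> (\<forall>i\<le>n. \<forall>y. \<not> left_of r1 r2 (d i) y)"

text \<open>A 4-cell of the diagram with bottom o, left middle a, right middle b, top t:
  a four-element cover-preserving sublattice of length 2 whose enclosed region contains
  no further element (an element strictly inside would lie in the open interval (o,t),
  right of a and left of b).\<close>
definition four_cell ::
  "('a::lattice \<Rightarrow> 'a \<Rightarrow> bool) \<Rightarrow> ('a \<Rightarrow> 'a \<Rightarrow> bool) \<Rightarrow> 'a \<Rightarrow> 'a \<Rightarrow> 'a \<Rightarrow> 'a \<Rightarrow> bool" where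
  "four_cell r1 r2 z a b t \<longleftrightarrow> covers z a \<and> covers a t \<and> covers z b \<and> covers b t
      \<and> left_of r1 r2 a b
      \<and> \<not> (\<exists>x. z < x \<and> x < t \<and> left_of r1 r2 a x \<and> left_of r1 r2 x b)"

definition traj_step ::
  "('a::lattice \<Rightarrow> 'a \<Rightarrow> bool) \<Rightarrow> ('a \<Rightarrow> 'a \<Rightarrow> bool) \<Rightarrow> 'a \<times> 'a \<Rightarrow> 'a \<times> 'a \<Rightarrow> bool" where
  "traj_step r1 r2 e e' \<longleftrightarrow> (\<exists>z a b t. four_cell r1 r2 z a b t \<and>
      ((e = (z, a) \<and> e' = (b, t)) \<or> (e = (a, t) \<and> e' = (z, b))))"

definition is_left_edge_of_cell ::
  "('a::lattice \<Rightarrow> 'a \<Rightarrow> bool) \<Rightarrow> ('a \<Rightarrow> 'a \<Rightarrow> bool) \<Rightarrow> 'a \<times> 'a \<Rightarrow> bool" where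
  "is_left_edge_of_cell r1 r2 e \<longleftrightarrow> (\<exists>z a b t. four_cell r1 r2 z a b t \<and> (e = (z, a) \<or> e = (a, t)))"

definition trajectory ::
  "('a::bounded_lattice \<Rightarrow> 'a \<Rightarrow> bool) \<Rightarrow> ('a \<Rightarrow> 'a \<Rightarrow> bool) \<Rightarrow> (nat \<Rightarrow> 'a) \<Rightarrow> nat \<Rightarrow> ('a \<times> 'a) list \<Rightarrow> bool" where
  "trajectory r1 r2 c i es \<longleftrightarrow> es \<noteq> [] \<and> hd es = (c (i - 1), c i)
      \<and> (\<forall>k. Suc k < length es \<longrightarrow> traj_step r1 r2 (es ! k) (es ! Suc k))
      \<and> \<not> is_left_edge_of_cell r1 r2 (last es)"

text \<open>The three permutations, given as their graphs (sets of pairs (i, pi(i))).\<close>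
definition pi1 ::
  "('a::bounded_lattice \<Rightarrow> 'a \<Rightarrow> bool) \<Rightarrow> ('a \<Rightarrow> 'a \<Rightarrow> bool) \<Rightarrow> nat \<Rightarrow> (nat \<Rightarrow> 'a) \<Rightarrow> (nat \<Rightarrow> 'a) \<Rightarrow> (nat \<times> nat) set" where
  "pi1 r1 r2 n c d = {(i, j). i \<in> {1..n} \<and> j \<in> {1..n} \<and>
      (\<exists>es. trajectory r1 r2 c i es \<and> last es = (d (j - 1), d j))}"

definition pi2 :: "nat \<Rightarrow> (nat \<Rightarrow> 'a::bounded_lattice) \<Rightarrow> (nat \<Rightarrow> 'a) \<Rightarrow> (nat \<times> nat) set" where
  "pi2 n c d = {(i, j). i \<in> {1..n} \<and> j \<in> {1..n} \<and>
      (\<exists>u. meet_irreducible u \<and> u \<noteq> top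
         \<and> \<not> c i \<le> u \<and> (\<forall>k\<le>n. \<not> c k \<le> u \<longrightarrow> c i \<le> c k)
         \<and> \<not> d j \<le> u \<and> (\<forall>k\<le>n. \<not> d k \<le> u \<longrightarrow> d j \<le> d k))}"

text \<open>eta (i,j) = c_i join d_j; beta_D is its kernel on the grid G = chain x chain.\<close>
definition beta_D :: "(nat \<Rightarrow> 'a::lattice) \<Rightarrow> (nat \<Rightarrow> 'a) \<Rightarrow> nat \<times> nat \<Rightarrow> nat \<times> nat \<Rightarrow> bool" where
  "beta_D c d p q \<longleftrightarrow> sup (c (fst p)) (d (snd p)) = sup (c (fst q)) (d (snd q))"

definition source_cell :: "(nat \<times> nat \<Rightarrow> nat \<times> nat \<Rightarrow> bool) \<Rightarrow> nat \<Rightarrow> nat \<Rightarrow> bool" where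
  "source_cell \<alpha> i j \<longleftrightarrow> \<alpha> (i - 1, j) (i, j) \<and> \<alpha> (i, j - 1) (i, j) \<and> \<not> \<alpha> (i - 1, j - 1) (i, j)"

definition pi3 :: "nat \<Rightarrow> (nat \<Rightarrow> 'a::bounded_lattice) \<Rightarrow> (nat \<Rightarrow> 'a) \<Rightarrow> (nat \<times> nat) set" where
  "pi3 n c d = {(i, j). i \<in> {1..n} \<and> j \<in> {1..n} \<and> source_cell (beta_D c d) i j}"

end

theory Submission
  imports Defs
begin

lemma covers_lt: "covers x y \<Longrightarrow> x < y" by (simp add: covers_def)

lemma covers_between:
  assumes "covers x y" "x \<le> z" "z \<le> y" shows "z = x \<or> z = y"
proof (rule ccontr)
  assume "\<not> (z = x \<or> z = y)"
  then have "x < z" "z < y" using assms(2,3) by (auto simp: order.strict_iff_order)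
  then show False using assms(1) unfolding covers_def by blast
qed

lemma planar_A: assumes "planar_diagram r1 r2" shows "linear_rel r1" "linear_rel r2" "x \<le> y \<longleftrightarrow> r1 x y \<and> r2 x y"
  using assms unfolding planar_diagram_def apply -
  apply (erule conjE, assumption)
  apply (erule conjE)+ apply assumption
  apply (erule conjE)+ apply (erule allE)+ apply assumption done

lemma linear_B: assumes "linear_rel r" shows "r x y \<or> r y x" "r x y \<Longrightarrow> r y x \<Longrightarrow> x = y" "r x y \<Longrightarrow> r y z \<Longrightarrow> r x z"
  using assms unfolding linear_rel_def by blast+

lemmas planar_facts = planar_A(3) linear_B[OF planar_A(1)] linear_B[OF planar_A(2)]

lemma left_of_incomp:
  assumes "planar_diagram r1 r2" "left_of r1 r2 x y"
  shows "\<not> x \<le> y \<and> \<not> y \<le> x"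
  using assms(2) planar_facts[OF assms(1)] unfolding left_of_def by blast

lemma incomp_left:
  assumes "planar_diagram r1 r2" "\<not> x \<le> y" "\<not> y \<le> x"
  shows "left_of r1 r2 x y \<or> left_of r1 r2 y x"
  using assms(2,3) planar_facts[OF assms(1), of x y] planar_facts[OF assms(1), of y x] unfolding left_of_def by metis

lemma left_of_asym:
  assumes "planar_diagram r1 r2" "left_of r1 r2 x y"
  shows "\<not> left_of r1 r2 y x"
  using assms(2) planar_facts[OF assms(1), of x y] unfolding left_of_def by blast

lemma exists_cover_below:
  fixes z x :: "'a::{finite,order}"
  assumes "z < x" shows "\<exists>y. covers z y \<and> y \<le> x"
proof -
  obtain m where m1: "z < m" "m \<le> x" and m2: "\<And>b. z < b \<Longrightarrow> b \<le> x \<Longrightarrow> b \<le> m \<Longrightarrow> m = b"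
    using finite_has_minimal[of "{y. z < y \<and> y \<le> x}"] assms by auto
  have "covers z m" unfolding covers_def
  proof (intro conjI notI)
    show "z < m" by fact
    assume "\<exists>w. z < w \<and> w < m"
    then obtain w where w: "z < w" "w < m" by blast
    have "w \<le> x" using w(2) m1(2) by (meson less_imp_le less_le_trans)
    moreover have "w \<le> m" using w(2) by (rule less_imp_le)
    ultimately show False using m2[of w] w by simp
  qed
  then show ?thesis using m1 by blast
qed

lemma exists_cover_above:
  fixes z x :: "'a::{finite,order}"
  assumes "z < x" shows "\<exists>y. z \<le> y \<and> covers y x"
proof -
  obtain m where m1: "z \<le> m" "m < x" and m2: "\<And>b. z \<le> b \<Longrightarrow> b < x \<Longrightarrow> m \<le> b \<Longrightarrow> m = b"
    using finite_has_maximal[of "{y. z \<le> y \<and> y < x}"] assms by auto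
  have "covers m x" unfolding covers_def
  proof (intro conjI notI)
    show "m < x" by fact
    assume "\<exists>w. m < w \<and> w < x"
    then obtain w where w: "m < w" "w < x" by blast
    have "z \<le> w" using w(1) m1(1) by (meson less_imp_le le_less_trans)
    moreover have "m \<le> w" using w(1) by (rule less_imp_le)
    ultimately show False using m2[of w] w by simp
  qed
  then show ?thesis using m1 by blast
qed

lemma jirr_below:
  fixes p y :: "'a::{finite,lattice}"
  assumes "\<not> p \<le> y" shows "\<exists>q. join_irreducible q \<and> q \<le> p \<and> \<not> q \<le> y"
proof -
  obtain m where m1: "m \<le> p" "\<not> m \<le> y" and m2: "\<And>b. b \<le> p \<Longrightarrow> \<not> b \<le> y \<Longrightarrow> b \<le> m \<Longrightarrow> m = b"
    using finite_has_minimal[of "{q. q \<le> p \<and> \<not> q \<le> y}"] assms by auto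
  have "join_irreducible m" unfolding join_irreducible_def
  proof (intro allI impI)
    fix a b assume ab: "m = sup a b"
    have a: "a \<le> m" and b: "b \<le> m" using ab by auto
    show "m = a \<or> m = b"
    proof (cases "a \<le> y")
      case True
      then have "\<not> b \<le> y" using ab m1 by auto
      then show ?thesis using m2[of b] b m1 by auto
    next
      case False
      then show ?thesis using m2[of a] a m1 by auto
    qed
  qed
  then show ?thesis using m1 by auto
qed

lemma cover_meet:
  fixes z :: "'a::lattice"
  assumes "covers z p" "covers z q" "p \<noteq> q" shows "inf p q = z"
proof -
  have zp: "z < p" and zq: "z < q" using assms by (simp_all add: covers_def)
  have "z \<le> inf p q" using zp zq by (simp add: less_imp_le)
  moreover have "inf p q \<noteq> p"
  proof
    assume "inf p q = p" then have "p \<le> q" by (metis inf.orderI)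
    then have "p = z \<or> p = q" using covers_between[OF assms(2), of p] zp by simp
    then show False using zp assms(3) by simp
  qed
  ultimately show ?thesis using covers_between[OF assms(1), of "inf p q"] by simp
qed

lemma cover_join:
  fixes t :: "'a::lattice"
  assumes "covers p t" "covers q t" "p \<noteq> q" shows "sup p q = t"
proof -
  have pt: "p < t" and qt: "q < t" using assms by (simp_all add: covers_def)
  have "sup p q \<le> t" using pt qt by (simp add: less_imp_le)
  moreover have "sup p q \<noteq> p"
  proof
    assume "sup p q = p" then have "q \<le> p" by (metis sup.orderI)
    then have "p = q \<or> p = t" using covers_between[OF assms(2), of p] pt by simp
    then show False using pt assms(3) by simp
  qed
  ultimately show ?thesis using covers_between[OF assms(1), of "sup p q"] by simp
qed

lemma three_covers:
  fixes z :: "'a::{finite,lattice}"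
  assumes sl: "slim_lattice TYPE('a)"
    and "covers z a" "covers z b" "covers z e" "a \<noteq> b" "a \<noteq> e" "b \<noteq> e"
  shows False
proof -
  have nle: "\<not> p \<le> z" if "covers z p" for p using that by (auto simp: covers_def)
  obtain a' where a': "join_irreducible a'" "a' \<le> a" "\<not> a' \<le> z" using jirr_below[OF nle[OF assms(2)]] by blast
  obtain b' where b': "join_irreducible b'" "b' \<le> b" "\<not> b' \<le> z" using jirr_below[OF nle[OF assms(3)]] by blast
  obtain e' where e': "join_irreducible e'" "e' \<le> e" "\<not> e' \<le> z" using jirr_below[OF nle[OF assms(4)]] by blast
  have inc: "\<not> x' \<le> y'" if "covers z x" "covers z y" "x \<noteq> y" "x' \<le> x" "y' \<le> y" "\<not> x' \<le> z" for x y x' y'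
  proof
    assume "x' \<le> y'" then have "x' \<le> inf x y" using that by (meson dual_order.trans le_inf_iff)
    then show False using cover_meet[of z x y] that by simp
  qed
  have "\<not> a' \<le> b'" by (rule inc[of a b]) (use assms a' b' in simp_all)
  moreover have "\<not> b' \<le> a'" by (rule inc[of b a]) (use assms a' b' in simp_all)
  moreover have "\<not> a' \<le> e'" by (rule inc[of a e]) (use assms a' e' in simp_all)
  moreover have "\<not> e' \<le> a'" by (rule inc[of e a]) (use assms a' e' in simp_all)
  moreover have "\<not> b' \<le> e'" by (rule inc[of b e]) (use assms b' e' in simp_all)
  moreover have "\<not> e' \<le> b'" by (rule inc[of e b]) (use assms b' e' in simp_all)
  ultimately show False using sl a' b' e' unfolding slim_lattice_def by blast
qed


locale ssl =
  fixes r1 r2 :: "'a::{finite,bounded_lattice} \<Rightarrow> 'a \<Rightarrow> bool" and c d :: "nat \<Rightarrow> 'a" and n :: nat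
  assumes slim: "slim_lattice TYPE('a)" and semi: "semimodular_lattice TYPE('a)"
    and planar: "planar_diagram r1 r2"
    and lb: "left_boundary_chain r1 r2 n c" and rb: "right_boundary_chain r1 r2 n d"
begin

lemma c0: "c 0 = bot" and cn: "c n = top" and ccov: "i < n \<Longrightarrow> covers (c i) (c (Suc i))"
  and cleft: "i \<le> n \<Longrightarrow> \<not> left_of r1 r2 y (c i)"
  using lb unfolding left_boundary_chain_def by blast+

lemma d0: "d 0 = bot" and dn: "d n = top" and dcov: "i < n \<Longrightarrow> covers (d i) (d (Suc i))"
  and dright: "i \<le> n \<Longrightarrow> \<not> left_of r1 r2 (d i) y"
  using rb unfolding right_boundary_chain_def by blast+

lemma semi_step: "covers (a::'a) b \<Longrightarrow> sup a x = sup b x \<or> covers (sup a x) (sup b x)"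
  using semi unfolding semimodular_lattice_def covers_or_eq_def by metis

lemma semi_step': "covers (a::'a) b \<Longrightarrow> sup x a = sup x b \<or> covers (sup x a) (sup x b)"
  using semi_step[of a b x] by (simp only: sup_commute)

lemma c_mono: "i \<le> k \<Longrightarrow> k \<le> n \<Longrightarrow> c i \<le> c k"
proof (induct k)
  case 0 then show ?case by simp
next
  case (Suc k)
  show ?case
  proof (cases "i = Suc k")
    case True then show ?thesis by simp
  next
    case False
    then have "c i \<le> c k" using Suc by simp
    moreover have "c k < c (Suc k)" using ccov[of k] Suc(3) covers_lt by simp
    ultimately show ?thesis by simp
  qed
qed

lemma d_mono: "i \<le> k \<Longrightarrow> k \<le> n \<Longrightarrow> d i \<le> d k"
proof (induct k)
  case 0 then show ?case by simp
next
  case (Suc k)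
  show ?case
  proof (cases "i = Suc k")
    case True then show ?thesis by simp
  next
    case False
    then have "d i \<le> d k" using Suc by simp
    moreover have "d k < d (Suc k)" using dcov[of k] Suc(3) covers_lt by simp
    ultimately show ?thesis by simp
  qed
qed

lemma c_strict: "i < k \<Longrightarrow> k \<le> n \<Longrightarrow> c i < c k"
proof -
  assume a: "i < k" "k \<le> n"
  then obtain k' where k: "k = Suc k'" by (cases k) auto
  have "c i \<le> c k'" using a k by (intro c_mono) auto
  moreover have "c k' < c k" using ccov[of k'] a k covers_lt by auto
  ultimately show ?thesis by (rule le_less_trans)
qed

lemma d_strict: "i < k \<Longrightarrow> k \<le> n \<Longrightarrow> d i < d k"
proof -
  assume a: "i < k" "k \<le> n"
  then obtain k' where k: "k = Suc k'" by (cases k) auto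
  have "d i \<le> d k'" using a k by (intro d_mono) auto
  moreover have "d k' < d k" using dcov[of k'] a k covers_lt by auto
  ultimately show ?thesis by (rule le_less_trans)
qed

lemma c_le_iff: "i \<le> n \<Longrightarrow> k \<le> n \<Longrightarrow> c i \<le> c k \<longleftrightarrow> i \<le> k"
  using c_mono c_strict by (meson leD le_less_linear)

lemma d_le_iff: "i \<le> n \<Longrightarrow> k \<le> n \<Longrightarrow> d i \<le> d k \<longleftrightarrow> i \<le> k"
  using d_mono d_strict by (meson leD le_less_linear)

lemma LcL:
  assumes "left_of r1 r2 x y" "k \<le> n" "c k \<le> y" shows "c k \<le> x"
proof (rule ccontr)
  assume nx: "\<not> c k \<le> x"
  have inc: "\<not> x \<le> y" "\<not> y \<le> x" using left_of_incomp[OF planar assms(1)] by auto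
  have "\<not> x \<le> c k" using inc assms(3) order_trans by blast
  then have "left_of r1 r2 (c k) x \<or> left_of r1 r2 x (c k)" using incomp_left[OF planar] nx by blast
  then have "left_of r1 r2 (c k) x" using cleft[OF assms(2)] by blast
  then have "r2 x (c k)" unfolding left_of_def by blast
  moreover have "r2 (c k) y" using assms(3) planar_facts(1)[OF planar] by blast
  moreover have "r2 y x" "x \<noteq> y" using assms(1) unfolding left_of_def by blast+
  ultimately show False using planar_facts(6,7)[OF planar] by metis
qed

lemma LdR:
  assumes "left_of r1 r2 x y" "k \<le> n" "d k \<le> x" shows "d k \<le> y"
proof (rule ccontr)
  assume ny: "\<not> d k \<le> y"
  have inc: "\<not> x \<le> y" "\<not> y \<le> x" using left_of_incomp[OF planar assms(1)] by auto
  have "\<not> y \<le> d k" using inc assms(3) order_trans by blast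
  then have "left_of r1 r2 (d k) y \<or> left_of r1 r2 y (d k)" using incomp_left[OF planar] ny by blast
  then have "left_of r1 r2 y (d k)" using dright[OF assms(2)] by blast
  then have "r1 y (d k)" unfolding left_of_def by blast
  moreover have "r1 (d k) x" using assms(3) planar_facts(1)[OF planar] by blast
  moreover have "r1 x y" "x \<noteq> y" using assms(1) unfolding left_of_def by blast+
  ultimately show False using planar_facts(3,4)[OF planar] by metis
qed

definition alpha :: "'a \<Rightarrow> nat" where "alpha x = Max {k. k \<le> n \<and> c k \<le> x}"
definition beta :: "'a \<Rightarrow> nat" where "beta x = Max {k. k \<le> n \<and> d k \<le> x}"

lemma alpha_props: "alpha x \<le> n" "c (alpha x) \<le> x" "k \<le> n \<Longrightarrow> c k \<le> x \<Longrightarrow> k \<le> alpha x"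
proof -
  have fin: "finite {k. k \<le> n \<and> c k \<le> x}" by simp
  have ne: "{k. k \<le> n \<and> c k \<le> x} \<noteq> {}" using c0 by (metis (mono_tags, lifting) bot_least empty_iff le0 mem_Collect_eq)
  have "alpha x \<in> {k. k \<le> n \<and> c k \<le> x}" unfolding alpha_def using Max_in[OF fin ne] .
  then show "alpha x \<le> n" "c (alpha x) \<le> x" by auto
  show "k \<le> n \<Longrightarrow> c k \<le> x \<Longrightarrow> k \<le> alpha x" unfolding alpha_def by (rule Max_ge[OF fin]) simp
qed

lemma beta_props: "beta x \<le> n" "d (beta x) \<le> x" "k \<le> n \<Longrightarrow> d k \<le> x \<Longrightarrow> k \<le> beta x"
proof -
  have fin: "finite {k. k \<le> n \<and> d k \<le> x}" by simp
  have ne: "{k. k \<le> n \<and> d k \<le> x} \<noteq> {}" using d0 by (metis (mono_tags, lifting) bot_least empty_iff le0 mem_Collect_eq)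
  have "beta x \<in> {k. k \<le> n \<and> d k \<le> x}" unfolding beta_def using Max_in[OF fin ne] .
  then show "beta x \<le> n" "d (beta x) \<le> x" by auto
  show "k \<le> n \<Longrightarrow> d k \<le> x \<Longrightarrow> k \<le> beta x" unfolding beta_def by (rule Max_ge[OF fin]) simp
qed

lemma alpha_mono: "x \<le> y \<Longrightarrow> alpha x \<le> alpha y"
  using alpha_props(1,2)[where x=x] alpha_props(3)[where k="alpha x" and x=y] order_trans by blast

lemma beta_mono: "x \<le> y \<Longrightarrow> beta x \<le> beta y"
  using beta_props(1,2)[where x=x] beta_props(3)[where k="beta x" and x=y] order_trans by blast

lemma G1:
  assumes ji: "join_irreducible x"
  shows "\<exists>k\<le>n. x = c k \<or> x = d k"
proof (rule ccontr)
  assume "\<not> (\<exists>k\<le>n. x = c k \<or> x = d k)"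
  then have nC: "\<And>k. k \<le> n \<Longrightarrow> x \<noteq> c k" and nD: "\<And>k. k \<le> n \<Longrightarrow> x \<noteq> d k" by auto
  have xb: "x \<noteq> bot" using nC[of 0] c0 by simp
  have xt: "x \<noteq> top" using nC[of n] cn by simp
  have "bot < x" using xb by (simp add: bot.not_eq_extremum)
  then obtain xs where xs: "covers xs x" using exists_cover_above by blast
  have below: "w \<le> xs" if wx: "w < x" for w
  proof -
    obtain y where y: "w \<le> y" "covers y x" using exists_cover_above[OF wx] by blast
    have "y = xs"
    proof (rule ccontr)
      assume "y \<noteq> xs"
      then have "x = sup y xs" using cover_join[OF y(2) xs] by simp
      then have "x = y \<or> x = xs" using ji unfolding join_irreducible_def by blast
      then show False using y(2) xs covers_lt by blast
    qed
    then show ?thesis using y by simp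
  qed
  define a where "a = alpha x"
  define b where "b = beta x"
  have ca: "c a \<le> x" "a \<le> n" using alpha_props a_def by auto
  have db: "d b \<le> x" "b \<le> n" using beta_props b_def by auto
  have "c a \<noteq> x" using nC ca by metis
  then have caxs: "c a \<le> xs" using below ca by (simp add: order.not_eq_order_implies_strict)
  have "d b \<noteq> x" using nD db by metis
  then have dbxs: "d b \<le> xs" using below db by (simp add: order.not_eq_order_implies_strict)
  have an: "a < n"
  proof (rule ccontr)
    assume "\<not> a < n" then have "a = n" using ca by simp
    then have "x = top" using ca cn by (simp add: top_le)
    then show False using xt by simp
  qed
  have bn: "b < n"
  proof (rule ccontr)
    assume "\<not> b < n" then have "b = n" using db by simp
    then have "x = top" using db dn by (simp add: top_le)
    then show False using xt by simp
  qed
  have ncx: "\<not> c (Suc a) \<le> x" using alpha_props(3)[where k="Suc a" and x=x] an a_def by auto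
  have ndx: "\<not> d (Suc b) \<le> x" using beta_props(3)[where k="Suc b" and x=x] bn b_def by auto
  have xsx: "xs \<le> x" using xs covers_lt less_imp_le by blast
  define p where "p = sup xs (c (Suc a))"
  define q where "q = sup xs (d (Suc b))"
  have "sup xs (c a) = p \<or> covers (sup xs (c a)) p" unfolding p_def using semi_step'[OF ccov[OF an]] .
  moreover have "sup xs (c a) = xs" using caxs by (simp add: sup_absorb1)
  moreover have "p \<noteq> xs" unfolding p_def using ncx xsx by (metis le_iff_sup order_trans sup_commute)
  ultimately have xsp: "covers xs p" by auto
  have "sup xs (d b) = q \<or> covers (sup xs (d b)) q" unfolding q_def using semi_step'[OF dcov[OF bn]] .
  moreover have "sup xs (d b) = xs" using dbxs by (simp add: sup_absorb1)
  moreover have "q \<noteq> xs" unfolding q_def using ndx xsx by (metis le_iff_sup order_trans sup_commute)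
  ultimately have xsq: "covers xs q" by auto
  have cp: "c (Suc a) \<le> p" unfolding p_def by simp
  have dq: "d (Suc b) \<le> q" unfolding q_def by simp
  have px: "\<not> p \<le> x" using cp ncx order_trans by blast
  have xp: "\<not> x \<le> p"
  proof
    assume "x \<le> p"
    then have "x = xs \<or> x = p" using covers_between[OF xsp xsx] by simp
    then show False using xs covers_lt px by auto
  qed
  have qx: "\<not> q \<le> x" using dq ndx order_trans by blast
  have xq: "\<not> x \<le> q"
  proof
    assume "x \<le> q"
    then have "x = xs \<or> x = q" using covers_between[OF xsq xsx] by simp
    then show False using xs covers_lt qx by auto
  qed
  have lp: "left_of r1 r2 p x"
  proof -
    have "left_of r1 r2 p x \<or> left_of r1 r2 x p" using incomp_left[OF planar px xp] .
    moreover have "\<not> left_of r1 r2 x p" using LcL[of x p "Suc a"] an cp ncx by auto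
    ultimately show ?thesis by blast
  qed
  have lq: "left_of r1 r2 x q"
  proof -
    have "left_of r1 r2 q x \<or> left_of r1 r2 x q" using incomp_left[OF planar qx xq] .
    moreover have "\<not> left_of r1 r2 q x" using LdR[of q x "Suc b"] bn dq ndx by auto
    ultimately show ?thesis by blast
  qed
  have "p \<noteq> q" using lp lq left_of_asym[OF planar] by blast
  moreover have "p \<noteq> x" using px by auto
  moreover have "x \<noteq> q" using qx by auto
  ultimately show False using three_covers[OF slim xsp xs xsq] by blast
qed

lemma rep: "x = sup (c (alpha x)) (d (beta x))"
proof (rule antisym)
  show "sup (c (alpha x)) (d (beta x)) \<le> x" using alpha_props beta_props by simp
  show "x \<le> sup (c (alpha x)) (d (beta x))"
  proof (rule ccontr)
    assume "\<not> x \<le> sup (c (alpha x)) (d (beta x))"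
    then obtain y where y: "join_irreducible y" "y \<le> x" "\<not> y \<le> sup (c (alpha x)) (d (beta x))"
      using jirr_below by blast
    obtain k where k: "k \<le> n" "y = c k \<or> y = d k" using G1[OF y(1)] by blast
    show False
    proof (cases "y = c k")
      case True
      then have "k \<le> alpha x" using alpha_props(3) k y by simp
      then have "y \<le> c (alpha x)" using True c_mono alpha_props(1) by simp
      then show False using y(3) le_supI1 by blast
    next
      case False
      then have yd: "y = d k" using k by simp
      then have "k \<le> beta x" using beta_props(3) k y by simp
      then have "y \<le> d (beta x)" using yd d_mono beta_props(1) by simp
      then show False using y(3) le_supI2 by blast
    qed
  qed
qed

lemma le_coord: "alpha x \<le> alpha y \<Longrightarrow> beta x \<le> beta y \<Longrightarrow> x \<le> y"
proof -
  assume a: "alpha x \<le> alpha y" "beta x \<le> beta y"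
  have "c (alpha x) \<le> y" using c_mono[OF a(1) alpha_props(1)] alpha_props(2)[of y] by (rule order_trans)
  moreover have "d (beta x) \<le> y" using d_mono[OF a(2) beta_props(1)] beta_props(2)[of y] by (rule order_trans)
  ultimately have "sup (c (alpha x)) (d (beta x)) \<le> y" by simp
  then show "x \<le> y" using rep[of x] by simp
qed

lemma left_coord: "left_of r1 r2 x y \<Longrightarrow> alpha y \<le> alpha x \<and> beta x \<le> beta y"
proof -
  assume l: "left_of r1 r2 x y"
  have "c (alpha y) \<le> x" using LcL[OF l alpha_props(1) alpha_props(2)] .
  then have "alpha y \<le> alpha x" using alpha_props(3) alpha_props(1) by simp
  moreover have "d (beta x) \<le> y" using LdR[OF l beta_props(1) beta_props(2)] .
  then have "beta x \<le> beta y" using beta_props(3) beta_props(1) by simp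
  ultimately show ?thesis by simp
qed

definition ff :: "nat \<Rightarrow> nat \<Rightarrow> 'a" where "ff i j = sup (c i) (d j)"

definition Jf :: "nat \<Rightarrow> nat" where "Jf i = (LEAST j. ff (i - 1) j = ff i j)"

lemma ff_stepc: "k < n \<Longrightarrow> ff k j = ff (Suc k) j \<or> covers (ff k j) (ff (Suc k) j)"
  unfolding ff_def using semi_step[OF ccov] by blast

lemma ff_stepd: "k < n \<Longrightarrow> ff i k = ff i (Suc k) \<or> covers (ff i k) (ff i (Suc k))"
  unfolding ff_def using semi_step'[OF dcov] by blast

lemma ff_mono: "i \<le> i' \<Longrightarrow> i' \<le> n \<Longrightarrow> j \<le> j' \<Longrightarrow> j' \<le> n \<Longrightarrow> ff i j \<le> ff i' j'"
  unfolding ff_def using c_mono d_mono by (meson sup_mono)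

lemma ff_le: "ff i j \<le> x \<longleftrightarrow> c i \<le> x \<and> d j \<le> x" unfolding ff_def by simp

lemma eq_up:
  assumes "ff (i - 1) j = ff i j" "j \<le> j'" "j' \<le> n" "1 \<le> i" "i \<le> n"
  shows "ff (i - 1) j' = ff i j'"
proof -
  have dj: "d j \<le> d j'" using d_mono assms by simp
  have "ff k j' = sup (ff k j) (d j')" for k unfolding ff_def using dj
    by (metis sup.absorb_iff2 sup_assoc)
  then show ?thesis using assms(1) by simp
qed

lemma eq_right:
  assumes "ff k (j - 1) = ff k j" "k \<le> k'" "k' \<le> n" "1 \<le> j" "j \<le> n"
  shows "ff k' (j - 1) = ff k' j"
proof -
  have ck: "c k \<le> c k'" using c_mono assms by simp
  have "ff k' l = sup (c k') (ff k l)" for l unfolding ff_def using ck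
    by (metis sup.absorb_iff2 sup_assoc sup_commute)
  then show ?thesis using assms(1) by simp
qed

lemma ff_0: "ff i 0 = c i" unfolding ff_def using d0 by simp
lemma ff_0': "ff 0 j = d j" unfolding ff_def using c0 by simp
lemma ff_n: "ff i n = top" unfolding ff_def using dn by simp

lemma Jf_props:
  assumes "1 \<le> i" "i \<le> n"
  shows "Jf i \<le> n" "1 \<le> Jf i" "ff (i - 1) (Jf i) = ff i (Jf i)"
    "j < Jf i \<Longrightarrow> ff (i - 1) j \<noteq> ff i j"
proof -
  have ex: "ff (i - 1) n = ff i n" using ff_n by simp
  show "ff (i - 1) (Jf i) = ff i (Jf i)" unfolding Jf_def using ex by (rule LeastI)
  show "Jf i \<le> n" unfolding Jf_def using ex by (rule Least_le)
  show "j < Jf i \<Longrightarrow> ff (i - 1) j \<noteq> ff i j" unfolding Jf_def using not_less_Least by blast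
  have "c (i - 1) \<noteq> c i" using c_strict[of "i - 1" i] assms by simp
  then have "ff (i - 1) 0 \<noteq> ff i 0" using ff_0 by simp
  then have "Jf i \<noteq> 0" using \<open>ff (i - 1) (Jf i) = ff i (Jf i)\<close> by metis
  then show "1 \<le> Jf i" by simp
qed

lemma Jf_source:
  assumes "1 \<le> i" "i \<le> n"
  shows "ff (i - 1) (Jf i - 1) \<noteq> ff (i - 1) (Jf i)" "ff i (Jf i - 1) = ff i (Jf i)"
    "ff (i - 1) (Jf i - 1) \<noteq> ff i (Jf i)" "covers (ff (i - 1) (Jf i - 1)) (ff i (Jf i))"
    "covers (ff (i - 1) (Jf i - 1)) (ff i (Jf i - 1))"
proof -
  define j where "j = Jf i"
  have j: "1 \<le> j" "j \<le> n" "ff (i - 1) j = ff i j" "ff (i - 1) (j - 1) \<noteq> ff i (j - 1)"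
    using Jf_props[OF assms] j_def by auto
  have im: "i - 1 < n" "Suc (i - 1) = i" using assms by auto
  have jm: "j - 1 < n" "Suc (j - 1) = j" using j by auto
  have c1: "covers (ff (i - 1) (j - 1)) (ff i (j - 1))" using ff_stepc[OF im(1), of "j - 1"] im j(4) by simp
  have le1: "ff i (j - 1) \<le> ff i j" using ff_mono[of i i "j - 1" j] j assms by simp
  have ne: "ff (i - 1) (j - 1) \<noteq> ff (i - 1) j"
  proof
    assume e: "ff (i - 1) (j - 1) = ff (i - 1) j"
    then have "ff i j = ff (i - 1) (j - 1)" using j(3) by simp
    then show False using c1 le1 covers_lt by (metis leD)
  qed
  have c2: "covers (ff (i - 1) (j - 1)) (ff (i - 1) j)" using ff_stepd[OF jm(1), of "i - 1"] jm ne by simp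
  have c3: "covers (ff (i - 1) (j - 1)) (ff i j)" using c2 j(3) by simp
  have eq: "ff i (j - 1) = ff i j"
    using covers_between[OF c3, of "ff i (j - 1)"] c1 le1 covers_lt by (metis less_imp_le less_irrefl)
  have lt: "ff (i - 1) (j - 1) \<noteq> ff i j" using covers_lt[OF c3] by simp
  show "ff (i - 1) (Jf i - 1) \<noteq> ff (i - 1) (Jf i)" using ne unfolding j_def .
  show "ff i (Jf i - 1) = ff i (Jf i)" using eq unfolding j_def .
  show "ff (i - 1) (Jf i - 1) \<noteq> ff i (Jf i)" using lt unfolding j_def .
  show "covers (ff (i - 1) (Jf i - 1)) (ff i (Jf i))" using c3 unfolding j_def .
  show "covers (ff (i - 1) (Jf i - 1)) (ff i (Jf i - 1))" using c1 unfolding j_def .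
qed

lemma source_iff:
  assumes "1 \<le> i" "i \<le> n" "1 \<le> j" "j \<le> n"
  shows "source_cell (beta_D c d) i j \<longleftrightarrow> j = Jf i"
proof
  assume "source_cell (beta_D c d) i j"
  then have s: "ff (i - 1) j = ff i j" "ff i (j - 1) = ff i j" "ff (i - 1) (j - 1) \<noteq> ff i j"
    unfolding source_cell_def beta_D_def ff_def by auto
  have "Jf i \<le> j" unfolding Jf_def using s(1) by (rule Least_le)
  moreover have "\<not> Jf i \<le> j - 1"
  proof
    assume "Jf i \<le> j - 1"
    then have "ff (i - 1) (j - 1) = ff i (j - 1)" using eq_up[OF Jf_props(3)[OF assms(1,2)]] assms by simp
    then show False using s by simp
  qed
  ultimately show "j = Jf i" by simp
next
  assume "j = Jf i"
  then show "source_cell (beta_D c d) i j"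
    using Jf_source[OF assms(1,2)] Jf_props[OF assms(1,2)] unfolding source_cell_def beta_D_def ff_def by auto
qed

definition GJ :: "(nat \<times> nat) set" where "GJ = {(i, j). i \<in> {1..n} \<and> j = Jf i}"

lemma pi3_eq: "pi3 n c d = GJ"
proof -
  have "(i, j) \<in> pi3 n c d \<longleftrightarrow> (i, j) \<in> GJ" for i j
  proof (cases "1 \<le> i \<and> i \<le> n")
    case True
    then show ?thesis unfolding pi3_def GJ_def using source_iff[of i j] Jf_props(1,2)[of i] by auto
  next
    case False
    then show ?thesis unfolding pi3_def GJ_def by auto
  qed
  then show ?thesis by auto
qed

lemma pi2_sub: "(i, j) \<in> pi2 n c d \<Longrightarrow> (i, j) \<in> GJ"
proof -
  assume "(i, j) \<in> pi2 n c d"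
  then obtain u where ij: "1 \<le> i" "i \<le> n" "1 \<le> j" "j \<le> n" and u: "meet_irreducible u" "u \<noteq> top"
    "\<not> c i \<le> u" "\<And>k. k \<le> n \<Longrightarrow> \<not> c k \<le> u \<Longrightarrow> c i \<le> c k"
    "\<not> d j \<le> u" "\<And>k. k \<le> n \<Longrightarrow> \<not> d k \<le> u \<Longrightarrow> d j \<le> d k"
    unfolding pi2_def by auto
  have cbelow: "c k \<le> u" if "k < i" for k
  proof (rule ccontr)
    assume "\<not> c k \<le> u"
    then have "c i \<le> c k" using u(4)[of k] that ij by simp
    then show False using c_le_iff[of i k] that ij by simp
  qed
  have dbelow: "d k \<le> u" if "k < j" for k
  proof (rule ccontr)
    assume "\<not> d k \<le> u"
    then have "d j \<le> d k" using u(6)[of k] that ij by simp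
    then show False using d_le_iff[of j k] that ij by simp
  qed
  have a1: "i - 1 \<le> alpha u" using alpha_props(3)[where k="i - 1" and x=u] cbelow[of "i - 1"] ij by simp
  have a2: "alpha u < i"
  proof (rule ccontr)
    assume "\<not> alpha u < i"
    then have "c i \<le> c (alpha u)" using c_mono alpha_props(1) by simp
    then show False using alpha_props(2)[of u] u(3) order_trans by blast
  qed
  have b1: "j - 1 \<le> beta u" using beta_props(3)[where k="j - 1" and x=u] dbelow[of "j - 1"] ij by simp
  have b2: "beta u < j"
  proof (rule ccontr)
    assume "\<not> beta u < j"
    then have "d j \<le> d (beta u)" using d_mono beta_props(1) by simp
    then show False using beta_props(2)[of u] u(5) order_trans by blast
  qed
  have "alpha u = i - 1" using a1 a2 ij(1) by arith
  moreover have "beta u = j - 1" using b1 b2 ij(3) by arith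
  ultimately have uff: "u = ff (i - 1) (j - 1)" unfolding ff_def using rep[of u] by simp
  have im: "i - 1 < n" "Suc (i - 1) = i" using ij by auto
  have jm: "j - 1 < n" "Suc (j - 1) = j" using ij by auto
  have n1: "ff (i - 1) (j - 1) \<noteq> ff i (j - 1)" using u(3) uff unfolding ff_def by (metis sup.cobounded1)
  have n2: "ff (i - 1) (j - 1) \<noteq> ff (i - 1) j" using u(5) uff unfolding ff_def by (metis sup.cobounded2)
  have cv1: "covers u (ff i (j - 1))" using ff_stepc[OF im(1), of "j - 1"] im n1 uff by simp
  have cv2: "covers u (ff (i - 1) j)" using ff_stepd[OF jm(1), of "i - 1"] jm n2 uff by simp
  have e: "ff i (j - 1) = ff (i - 1) j"
  proof (rule ccontr)
    assume ne: "ff i (j - 1) \<noteq> ff (i - 1) j"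
    then have "u = inf (ff i (j - 1)) (ff (i - 1) j)" using cover_meet[OF cv1 cv2] by simp
    then have "u = ff i (j - 1) \<or> u = ff (i - 1) j" using u(1) unfolding meet_irreducible_def by blast
    then show False using cv1 cv2 covers_lt by blast
  qed
  have "ff i j = sup (ff i (j - 1)) (ff (i - 1) j)"
  proof (rule antisym)
    have "c i \<le> sup (ff i (j - 1)) (ff (i - 1) j)" unfolding ff_def by (simp add: le_supI1)
    moreover have "d j \<le> sup (ff i (j - 1)) (ff (i - 1) j)" unfolding ff_def by (simp add: le_supI2)
    ultimately show "ff i j \<le> sup (ff i (j - 1)) (ff (i - 1) j)" unfolding ff_def[of i j] by simp
    have "ff i (j - 1) \<le> ff i j" using ff_mono[of i i "j - 1" j] ij by simp
    moreover have "ff (i - 1) j \<le> ff i j" using ff_mono[of "i - 1" i j j] ij by simp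
    ultimately show "sup (ff i (j - 1)) (ff (i - 1) j) \<le> ff i j" by simp
  qed
  then have e2: "ff i j = ff i (j - 1)" using e by simp
  have s1: "ff (i - 1) j = ff i j" using e e2 by simp
  have s2: "ff i (j - 1) = ff i j" using e2 by simp
  have "u < ff i (j - 1)" using covers_lt[OF cv1] .
  then have s3: "ff (i - 1) (j - 1) \<noteq> ff i j" using uff s2 by simp
  have "source_cell (beta_D c d) i j"
    unfolding source_cell_def beta_D_def fst_conv snd_conv ff_def[symmetric]
    using s1 s2 s3 by blast
  then show ?thesis using source_iff ij unfolding GJ_def by auto
qed

lemma pi2_sup: "(i, j) \<in> GJ \<Longrightarrow> (i, j) \<in> pi2 n c d"
proof -
  assume "(i, j) \<in> GJ"
  then have ij: "1 \<le> i" "i \<le> n" and jd: "j = Jf i" unfolding GJ_def by auto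
  have j: "1 \<le> j" "j \<le> n" using Jf_props[OF ij] jd by auto
  define v where "v = ff (i - 1) (j - 1)"
  define w where "w = ff i j"
  have src: "ff i (j - 1) = w" "ff (i - 1) j = w" "v \<noteq> w"
    using Jf_source[OF ij] Jf_props[OF ij] jd unfolding v_def w_def by auto
  have "v < w" using covers_lt[OF Jf_source(4)[OF ij]] jd unfolding v_def w_def by simp
  then have "v \<le> w" by (rule less_imp_le)
  note src = src this
  have vin: "v \<in> {x. v \<le> x \<and> \<not> w \<le> x}" using src by auto
  obtain m where m: "v \<le> m" "\<not> w \<le> m" and mmax: "\<And>b. v \<le> b \<Longrightarrow> \<not> w \<le> b \<Longrightarrow> m \<le> b \<Longrightarrow> m = b"
    using finite_has_maximal2[OF _ vin] by auto
  have mi: "meet_irreducible m" unfolding meet_irreducible_def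
  proof (intro allI impI)
    fix a b assume ab: "m = inf a b"
    have ma: "m \<le> a" "m \<le> b" using ab by auto
    show "m = a \<or> m = b"
    proof (rule ccontr)
      assume "\<not> (m = a \<or> m = b)"
      then have mna: "m \<noteq> a" and mnb: "m \<noteq> b" by auto
      have "w \<le> a"
      proof (rule ccontr)
        assume "\<not> w \<le> a" then have "m = a" using mmax[of a] ma m(1) order_trans by blast
        then show False using mna by simp
      qed
      moreover have "w \<le> b"
      proof (rule ccontr)
        assume "\<not> w \<le> b" then have "m = b" using mmax[of b] ma m(1) order_trans by blast
        then show False using mnb by simp
      qed
      ultimately show False using ab m(2) by simp
    qed
  qed
  have mt: "m \<noteq> top" using m(2) by auto
  have vle: "c (i - 1) \<le> m" "d (j - 1) \<le> m" using m(1) unfolding v_def ff_def by auto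
  have nci: "\<not> c i \<le> m"
  proof
    assume "c i \<le> m"
    then have "ff i (j - 1) \<le> m" unfolding ff_def using vle by simp
    then show False using src m by simp
  qed
  have ndj: "\<not> d j \<le> m"
  proof
    assume "d j \<le> m"
    then have "ff (i - 1) j \<le> m" unfolding ff_def using vle by simp
    then show False using src m by simp
  qed
  have ck: "c i \<le> c k" if "k \<le> n" "\<not> c k \<le> m" for k
  proof -
    have "\<not> k < i"
    proof
      assume "k < i" then have "c k \<le> c (i - 1)" using c_mono ij by simp
      then show False using that vle order_trans by blast
    qed
    then show ?thesis using c_mono that by simp
  qed
  have dk: "d j \<le> d k" if "k \<le> n" "\<not> d k \<le> m" for k
  proof -
    have "\<not> k < j"
    proof
      assume "k < j" then have "d k \<le> d (j - 1)" using d_mono j by simp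
      then show False using that vle order_trans by blast
    qed
    then show ?thesis using d_mono that by simp
  qed
  show ?thesis unfolding pi2_def using ij j mi mt nci ndj ck dk by auto
qed

lemma pi2_eq: "pi2 n c d = GJ"
  using pi2_sub pi2_sup by auto

lemma four_cell_simple:
  assumes "covers z a" "covers a t" "covers z b" "covers b t" "left_of r1 r2 a b"
  shows "four_cell r1 r2 z a b t"
proof -
  have nx: "\<not> (\<exists>x. z < x \<and> x < t \<and> left_of r1 r2 a x \<and> left_of r1 r2 x b)"
  proof
    assume "\<exists>x. z < x \<and> x < t \<and> left_of r1 r2 a x \<and> left_of r1 r2 x b"
    then obtain x where x: "z < x" "left_of r1 r2 a x" "left_of r1 r2 x b" by blast
    obtain y where y: "covers z y" "y \<le> x" using exists_cover_below[OF x(1)] by blast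
    have "y \<noteq> a" using y(2) left_of_incomp[OF planar x(2)] by auto
    moreover have "y \<noteq> b" using y(2) left_of_incomp[OF planar x(3)] by auto
    moreover have "a \<noteq> b" using assms(5) unfolding left_of_def by simp
    ultimately show False using three_covers[OF slim assms(1) assms(3) y(1)] by blast
  qed
  show ?thesis unfolding four_cell_def using assms nx by blast
qed

lemma cell_facts:
  assumes "four_cell r1 r2 z a b t"
  shows "covers z a" "covers a t" "covers z b" "covers b t" "left_of r1 r2 a b" "a \<noteq> b"
    "inf a b = z" "sup a b = t"
proof -
  show ca: "covers z a" "covers a t" "covers z b" "covers b t" "left_of r1 r2 a b"
    using assms unfolding four_cell_def by blast+
  show ab: "a \<noteq> b" using ca(5) unfolding left_of_def by simp
  show "inf a b = z" using cover_meet[OF ca(1) ca(3) ab] .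
  show "sup a b = t" using cover_join[OF ca(2) ca(4) ab] .
qed

lemma UU_aux:
  assumes c1: "four_cell r1 r2 z a b t" and c2: "four_cell r1 r2 z' a b' t"
    and ab: "alpha b' \<le> alpha b"
  shows "b = b'"
proof -
  note f1 = cell_facts[OF c1] and f2 = cell_facts[OF c2]
  have z'a: "z' \<le> a" and z'b': "z' \<le> b'" using f2 covers_lt less_imp_le by blast+
  have "alpha z' \<le> alpha b" using alpha_mono[OF z'b'] ab by simp
  moreover have "beta z' \<le> beta b" using beta_mono[OF z'a] left_coord[OF f1(5)] by simp
  ultimately have "z' \<le> b" by (rule le_coord)
  then have "z' \<le> z" using z'a f1(7) by (metis le_inf_iff)
  moreover have "z \<le> a" using f1(1) covers_lt less_imp_le by blast
  ultimately have "z = z' \<or> z = a" using covers_between[OF f2(1)] by simp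
  then have zz: "z = z'" using f1(1) covers_lt by blast
  show "b = b'"
  proof (rule ccontr)
    assume "b \<noteq> b'"
    moreover have "a \<noteq> b'" using f2(6) .
    ultimately show False using three_covers[OF slim f1(1) f1(3)] f2(3) zz f1(6) by blast
  qed
qed

lemma LU_contra:
  assumes c1: "four_cell r1 r2 z a b t" and c2: "four_cell r1 r2 z2 z b2 a"
  shows False
proof -
  note f1 = cell_facts[OF c1] and f2 = cell_facts[OF c2]
  have b2a: "b2 \<le> a" and zb: "z \<le> b" using f1 f2 covers_lt less_imp_le by blast+
  have "alpha b2 \<le> alpha z" "beta z \<le> beta b2" using left_coord[OF f2(5)] by auto
  have "alpha b2 \<le> alpha b" using left_coord[OF f2(5)] alpha_mono[OF zb] by simp
  moreover have "beta b2 \<le> beta b" using beta_mono[OF b2a] left_coord[OF f1(5)] by simp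
  ultimately have "b2 \<le> b" by (rule le_coord)
  then have "a \<le> b" using zb f2(8) by (metis le_sup_iff)
  then show False using left_of_incomp[OF planar f1(5)] by simp
qed

lemma traj_det:
  assumes "traj_step r1 r2 e e1" "traj_step r1 r2 e e2" shows "e1 = e2"
proof -
  obtain z a b t where c1: "four_cell r1 r2 z a b t" and o1: "(e = (z, a) \<and> e1 = (b, t)) \<or> (e = (a, t) \<and> e1 = (z, b))"
    using assms(1) unfolding traj_step_def by blast
  obtain z' a' b' t' where c2: "four_cell r1 r2 z' a' b' t'" and o2: "(e = (z', a') \<and> e2 = (b', t')) \<or> (e = (a', t') \<and> e2 = (z', b'))"
    using assms(2) unfolding traj_step_def by blast
  note f1 = cell_facts[OF c1] and f2 = cell_facts[OF c2]
  show ?thesis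
  proof (cases "e = (z, a)")
    case L1: True
    show ?thesis
    proof (cases "e = (z', a')")
      case True
      then have zz: "z' = z" "a' = a" using L1 by auto
      have "b = b'"
      proof (rule ccontr)
        assume "b \<noteq> b'"
        then show False using three_covers[OF slim f1(1) f1(3)] f2(3) f1(6) f2(6) zz by metis
      qed
      have "\<not> (e = (a, t))" using L1 f1(1) covers_lt by auto
      then have e1: "e1 = (b, t)" using o1 L1 by blast
      have "\<not> (e = (a', t'))" using True f2(1) covers_lt by auto
      then have e2: "e2 = (b', t')" using o2 True by blast
      have "t = t'" using f1(8) f2(8) zz \<open>b = b'\<close> by simp
      then show ?thesis using e1 e2 \<open>b = b'\<close> by simp
    next
      case False
      then have "e = (a', t')" using o2 by blast
      then have "a' = z" "t' = a" using L1 by auto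
      then show ?thesis using LU_contra[OF c1] c2 by blast
    qed
  next
    case U1: False
    then have eat: "e = (a, t)" using o1 by blast
    show ?thesis
    proof (cases "e = (z', a')")
      case True
      then have "z' = a" "a' = t" using eat by auto
      then show ?thesis using LU_contra[OF c2] c1 by blast
    next
      case False
      then have "e = (a', t')" using o2 by blast
      then have at: "a' = a" "t' = t" using eat by auto
      have c2': "four_cell r1 r2 z' a b' t" using c2 at by simp
      have "b = b'"
      proof (cases "alpha b' \<le> alpha b")
        case True then show ?thesis using UU_aux[OF c1 c2'] by simp
      next
        case False then show ?thesis using UU_aux[OF c2' c1] by simp
      qed
      moreover have "z = z'" using f1(7) f2(7) at \<open>b = b'\<close> by simp
      moreover have "e1 = (z, b)" using o1 U1 by blast
      moreover have "e2 = (z', b')" using o2 False by blast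
      ultimately show ?thesis by simp
    qed
  qed
qed

lemma traj_left: "traj_step r1 r2 e e' \<Longrightarrow> is_left_edge_of_cell r1 r2 e"
  unfolding traj_step_def is_left_edge_of_cell_def by blast

lemma last_not_left: "j \<le> n \<Longrightarrow> 1 \<le> j \<Longrightarrow> \<not> is_left_edge_of_cell r1 r2 (d (j - 1), d j)"
proof
  assume j: "j \<le> n" "1 \<le> j" and "is_left_edge_of_cell r1 r2 (d (j - 1), d j)"
  then obtain z a b t where c: "four_cell r1 r2 z a b t" and o: "(d (j - 1), d j) = (z, a) \<or> (d (j - 1), d j) = (a, t)"
    unfolding is_left_edge_of_cell_def by blast
  have l: "left_of r1 r2 a b" using cell_facts[OF c] by simp
  show False
  proof (cases "(d (j - 1), d j) = (z, a)")
    case True then have "a = d j" by simp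
    then show False using dright[OF j(1)] l by simp
  next
    case False then have "a = d (j - 1)" using o by blast
    then show False using dright[of "j - 1"] j l by simp
  qed
qed

lemma traj_unique:
  assumes "trajectory r1 r2 c i xs" "trajectory r1 r2 c i ys"
  shows "xs = ys"
proof -
  have x: "xs \<noteq> []" "hd xs = (c (i - 1), c i)" "\<And>k. Suc k < length xs \<Longrightarrow> traj_step r1 r2 (xs ! k) (xs ! Suc k)"
    "\<not> is_left_edge_of_cell r1 r2 (last xs)" using assms(1) unfolding trajectory_def by blast+
  have y: "ys \<noteq> []" "hd ys = (c (i - 1), c i)" "\<And>k. Suc k < length ys \<Longrightarrow> traj_step r1 r2 (ys ! k) (ys ! Suc k)"
    "\<not> is_left_edge_of_cell r1 r2 (last ys)" using assms(2) unfolding trajectory_def by blast+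
  have eq: "xs ! k = ys ! k" if "k < length xs" "k < length ys" for k
    using that
  proof (induct k)
    case 0 then show ?case using x(1,2) y(1,2) by (simp add: hd_conv_nth)
  next
    case (Suc k)
    then have "xs ! k = ys ! k" by simp
    then show ?case using traj_det x(3)[of k] y(3)[of k] Suc by metis
  qed
  have len: "length xs = length ys"
  proof (rule ccontr)
    assume ne: "length xs \<noteq> length ys"
    show False
    proof (cases "length xs < length ys")
      case True
      have "last xs = xs ! (length xs - 1)" using x(1) by (simp add: last_conv_nth)
      also have "\<dots> = ys ! (length xs - 1)" using eq True x(1) by simp
      finally have "is_left_edge_of_cell r1 r2 (last xs)"
        using traj_left y(3)[of "length xs - 1"] True x(1) by simp
      then show False using x(4) by simp
    next
      case False
      then have lt: "length ys < length xs" using ne by simp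
      have "last ys = ys ! (length ys - 1)" using y(1) by (simp add: last_conv_nth)
      also have "\<dots> = xs ! (length ys - 1)" using eq lt y(1) by simp
      finally have "is_left_edge_of_cell r1 r2 (last ys)"
        using traj_left x(3)[of "length ys - 1"] lt y(1) by simp
      then show False using y(4) by simp
    qed
  qed
  show ?thesis using len eq by (simp add: nth_equalityI)
qed

definition EE :: "nat \<Rightarrow> nat \<Rightarrow> 'a \<times> 'a" where "EE i k = (ff (i - 1) k, ff i k)"
definition FF :: "nat \<Rightarrow> nat \<Rightarrow> 'a \<times> 'a" where "FF i k = (ff k (Jf i - 1), ff k (Jf i))"
definition RR :: "'a \<times> 'a \<Rightarrow> 'a \<times> 'a \<Rightarrow> bool" where "RR x y = (x = y \<or> traj_step r1 r2 x y)"

lemma E_step: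
  assumes ij: "1 \<le> i" "i \<le> n" and k: "Suc k < Jf i"
  shows "RR (EE i k) (EE i (Suc k))"
proof (cases "EE i k = EE i (Suc k)")
  case True then show ?thesis unfolding RR_def by simp
next
  case False
  define z where "z = ff (i - 1) k"
  define a where "a = ff i k"
  define b where "b = ff (i - 1) (Suc k)"
  define t where "t = ff i (Suc k)"
  have ne: "(z, a) \<noteq> (b, t)" using False unfolding EE_def z_def a_def b_def t_def .
  have jn: "Jf i \<le> n" using Jf_props[OF ij] by simp
  have im: "i - 1 < n" "Suc (i - 1) = i" using ij by auto
  have za: "covers z a" using ff_stepc[OF im(1), of k] Jf_props(4)[OF ij, of k] k im unfolding z_def a_def by simp
  have bt: "covers b t" using ff_stepc[OF im(1), of "Suc k"] Jf_props(4)[OF ij, of "Suc k"] k im unfolding b_def t_def by simp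
  have kn: "k < n" using k jn by simp
  have zb0: "z = b \<or> covers z b" using ff_stepd[OF kn, of "i - 1"] unfolding z_def b_def .
  have at0: "a = t \<or> covers a t" using ff_stepd[OF kn, of i] unfolding a_def t_def .
  have zl: "z \<le> a" "b \<le> t" "z \<le> b" "a \<le> t" using za bt zb0 at0 covers_lt less_imp_le by blast+
  have zb: "covers z b"
  proof -
    { assume zbe: "z = b"
      then have "a = z \<or> a = t" using covers_between[OF bt] zl by simp
      then have "a = t" using za covers_lt by blast
      then have False using ne zbe by simp }
    then show ?thesis using zb0 by blast
  qed
  have at: "covers a t"
  proof -
    { assume ate: "a = t"
      then have "b = z \<or> b = a" using covers_between[OF za] zl by simp
      moreover have "b \<noteq> t" using bt covers_lt by blast
      ultimately have "b = z" using ate by simp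
      then have False using ne ate by simp }
    then show ?thesis using at0 by blast
  qed
  have cia: "c i \<le> a" unfolding a_def ff_def by simp
  have cib: "\<not> c i \<le> b"
  proof
    assume "c i \<le> b"
    then have "t \<le> b" unfolding t_def b_def ff_def by simp
    then show False using bt covers_lt by (metis leD)
  qed
  have nab: "\<not> a \<le> b" using cia cib order_trans by blast
  have nba: "\<not> b \<le> a"
  proof
    assume "b \<le> a"
    then have "b = z \<or> b = a" using covers_between[OF za] zl by simp
    then show False using zb covers_lt cia cib by blast
  qed
  have "left_of r1 r2 a b"
  proof -
    have "left_of r1 r2 a b \<or> left_of r1 r2 b a" using incomp_left[OF planar nab nba] .
    moreover have "\<not> left_of r1 r2 b a" using LcL[of b a i] ij cia cib by blast
    ultimately show ?thesis by blast
  qed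
  then have "four_cell r1 r2 z a b t" using four_cell_simple za at zb bt by blast
  then have "traj_step r1 r2 (z, a) (b, t)" unfolding traj_step_def by blast
  then show ?thesis unfolding RR_def EE_def z_def a_def b_def t_def by simp
qed

lemma row_ne:
  assumes ij: "1 \<le> i" "i \<le> n" and m: "m \<le> i - 1"
  shows "ff m (Jf i - 1) \<noteq> ff m (Jf i)"
proof
  assume "ff m (Jf i - 1) = ff m (Jf i)"
  then have "ff (i - 1) (Jf i - 1) = ff (i - 1) (Jf i)"
    using eq_right[of m "Jf i" "i - 1"] m ij Jf_props(1,2)[OF ij] by simp
  then show False using Jf_source(1)[OF ij] by simp
qed

lemma F_step:
  assumes ij: "1 \<le> i" "i \<le> n" and k: "Suc k \<le> i - 1"
  shows "RR (FF i (Suc k)) (FF i k)"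
proof (cases "FF i (Suc k) = FF i k")
  case True then show ?thesis unfolding RR_def by simp
next
  case False
  define j where "j = Jf i"
  have j: "1 \<le> j" "j \<le> n" using Jf_props(1,2)[OF ij] j_def by auto
  define z where "z = ff k (j - 1)"
  define a where "a = ff (Suc k) (j - 1)"
  define b where "b = ff k j"
  define t where "t = ff (Suc k) j"
  have ne: "(a, t) \<noteq> (z, b)" using False unfolding FF_def z_def a_def b_def t_def j_def .
  have jm: "j - 1 < n" "Suc (j - 1) = j" using j by auto
  have kn: "k < n" using k ij by simp
  have at: "covers a t" using ff_stepd[OF jm(1), of "Suc k"] row_ne[OF ij, of "Suc k"] k jm unfolding a_def t_def j_def by simp
  have zb: "covers z b" using ff_stepd[OF jm(1), of k] row_ne[OF ij, of k] k jm unfolding z_def b_def j_def by simp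
  have za0: "z = a \<or> covers z a" using ff_stepc[OF kn, of "j - 1"] unfolding z_def a_def .
  have bt0: "b = t \<or> covers b t" using ff_stepc[OF kn, of j] unfolding b_def t_def .
  have zl: "z \<le> a" "b \<le> t" "z \<le> b" "a \<le> t" using at zb za0 bt0 covers_lt less_imp_le by blast+
  have za: "covers z a"
  proof -
    { assume zae: "z = a"
      then have "b = a \<or> b = t" using covers_between[OF at] zl by simp
      then have "b = t" using zb zae covers_lt by blast
      then have False using ne zae by simp }
    then show ?thesis using za0 by blast
  qed
  have bt: "covers b t"
  proof -
    { assume bte: "b = t"
      then have "a = z \<or> a = b" using covers_between[OF zb] zl by simp
      moreover have "a \<noteq> t" using at covers_lt by blast
      ultimately have "a = z" using bte by simp
      then have False using ne bte by simp }
    then show ?thesis using bt0 by blast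
  qed
  have djb: "d j \<le> b" unfolding b_def ff_def by simp
  have dja: "\<not> d j \<le> a"
  proof
    assume "d j \<le> a"
    then have "t \<le> a" unfolding t_def a_def ff_def by simp
    then show False using at covers_lt by (metis leD)
  qed
  have nba: "\<not> b \<le> a" using djb dja order_trans by blast
  have nab: "\<not> a \<le> b"
  proof
    assume "a \<le> b"
    then have "a = z \<or> a = b" using covers_between[OF zb] zl by simp
    then show False using za covers_lt djb dja by blast
  qed
  have "left_of r1 r2 a b"
  proof -
    have "left_of r1 r2 a b \<or> left_of r1 r2 b a" using incomp_left[OF planar nab nba] .
    moreover have "\<not> left_of r1 r2 b a" using LdR[of b a j] j djb dja by blast
    ultimately show ?thesis by blast
  qed
  then have "four_cell r1 r2 z a b t" using four_cell_simple za at zb bt by blast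
  then have "traj_step r1 r2 (a, t) (z, b)" unfolding traj_step_def by blast
  then show ?thesis unfolding RR_def FF_def z_def a_def b_def t_def j_def by simp
qed

lemma junction: "1 \<le> i \<Longrightarrow> i \<le> n \<Longrightarrow> EE i (Jf i - 1) = FF i (i - 1)"
  unfolding EE_def FF_def using Jf_source(2) Jf_props(3) by simp

definition raw :: "nat \<Rightarrow> ('a \<times> 'a) list" where
  "raw i = map (EE i) [0..<Jf i] @ map (FF i) (rev [0..<i - 1])"

lemma succ_upt: "(\<And>k. a \<le> k \<Longrightarrow> Suc k < b \<Longrightarrow> P k (Suc k)) \<Longrightarrow> successively P [a..<b]"
  unfolding successively_conv_nth by (simp add: add.commute)

lemma raw_succ:
  assumes ij: "1 \<le> i" "i \<le> n"
  shows "successively RR (raw i)"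
proof -
  have s1: "successively RR (map (EE i) [0..<Jf i])"
    unfolding successively_map by (rule succ_upt) (use E_step[OF ij] in simp)
  have s2: "successively RR (map (FF i) (rev [0..<i - 1]))"
    unfolding successively_map successively_rev by (rule succ_upt) (use F_step[OF ij] in simp)
  have j1: "1 \<le> Jf i" using Jf_props[OF ij] by simp
  have s3: "RR (last (map (EE i) [0..<Jf i])) (hd (map (FF i) (rev [0..<i - 1])))"
    if "[0..<i - 1] \<noteq> []"
  proof -
    have i2: "2 \<le> i" using that by simp
    have "last (map (EE i) [0..<Jf i]) = EE i (Jf i - 1)" using j1 by (simp add: last_map)
    also have "\<dots> = FF i (Suc (i - 2))" using junction[OF ij] i2 by (simp add: Suc_diff_Suc numeral_2_eq_2)
    finally have l: "last (map (EE i) [0..<Jf i]) = FF i (Suc (i - 2))" .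
    have h: "hd (map (FF i) (rev [0..<i - 1])) = FF i (i - 2)" using i2 by (simp add: hd_map hd_rev last_map numeral_2_eq_2)
    show ?thesis unfolding l h using F_step[OF ij, of "i - 2"] i2 by simp
  qed
  show ?thesis unfolding raw_def successively_append_iff using s1 s2 s3 by auto
qed

lemma raw_hd: "1 \<le> i \<Longrightarrow> i \<le> n \<Longrightarrow> hd (raw i) = (c (i - 1), c i)"
  unfolding raw_def using Jf_props(2)[of i] by (simp add: hd_map EE_def ff_0 upt_rec)

lemma raw_last: "1 \<le> i \<Longrightarrow> i \<le> n \<Longrightarrow> last (raw i) = (d (Jf i - 1), d (Jf i))"
proof -
  assume ij: "1 \<le> i" "i \<le> n"
  have j1: "1 \<le> Jf i" using Jf_props[OF ij] by simp
  have "last (raw i) = FF i 0"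
  proof (cases "i = 1")
    case True
    then have "last (raw i) = EE i (Jf i - 1)" unfolding raw_def using j1 by (simp add: last_map)
    then show ?thesis using junction[OF ij] True by simp
  next
    case False
    then have "[0..<i - 1] \<noteq> []" using ij by simp
    then show ?thesis unfolding raw_def by (simp add: last_map last_rev hd_map)
  qed
  then show ?thesis unfolding FF_def ff_0' .
qed

lemma raw_traj:
  assumes ij: "1 \<le> i" "i \<le> n"
  shows "trajectory r1 r2 c i (remdups_adj (raw i))"
proof -
  define es where "es = remdups_adj (raw i)"
  have j: "1 \<le> Jf i" "Jf i \<le> n" using Jf_props[OF ij] by auto
  have ne: "raw i \<noteq> []" unfolding raw_def using j by simp
  have sr: "successively RR es" unfolding es_def by (rule successively_remdups_adjI[OF raw_succ[OF ij]])
  have sd: "successively (\<noteq>) es" unfolding es_def using distinct_adj_remdups_adj unfolding distinct_adj_def .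
  have st: "traj_step r1 r2 (es ! k) (es ! Suc k)" if "Suc k < length es" for k
    using successively_nth[OF sr that] successively_nth[OF sd that] unfolding RR_def by blast
  have "last es = (d (Jf i - 1), d (Jf i))" unfolding es_def using raw_last[OF ij] by simp
  then have nl: "\<not> is_left_edge_of_cell r1 r2 (last es)" using last_not_left j by simp
  show ?thesis unfolding trajectory_def es_def[symmetric]
    using ne raw_hd[OF ij] st nl by (simp add: es_def)
qed

lemma pi1_eq: "pi1 r1 r2 n c d = GJ"
proof -
  have "(i, j) \<in> pi1 r1 r2 n c d \<longleftrightarrow> (i, j) \<in> GJ" for i j
  proof
    assume "(i, j) \<in> pi1 r1 r2 n c d"
    then obtain es where ij: "1 \<le> i" "i \<le> n" "1 \<le> j" "j \<le> n" and es: "trajectory r1 r2 c i es"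
      "last es = (d (j - 1), d j)" unfolding pi1_def by auto
    have "es = remdups_adj (raw i)" using traj_unique[OF es(1) raw_traj[OF ij(1,2)]] .
    then have "d j = d (Jf i)" using es(2) raw_last[OF ij(1,2)] by simp
    then have "j = Jf i" using d_le_iff[of j "Jf i"] d_le_iff[of "Jf i" j] ij Jf_props(1)[OF ij(1,2)] by simp
    then show "(i, j) \<in> GJ" unfolding GJ_def using ij by simp
  next
    assume "(i, j) \<in> GJ"
    then have ij: "1 \<le> i" "i \<le> n" "j = Jf i" unfolding GJ_def by auto
    show "(i, j) \<in> pi1 r1 r2 n c d" unfolding pi1_def
      using raw_traj[OF ij(1,2)] raw_last[OF ij(1,2)] Jf_props(1,2)[OF ij(1,2)] ij by auto
  qed
  then show ?thesis by auto
qed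

end

theorem proposition2p7:
  fixes r1 r2 :: "'a::{finite,bounded_lattice} \<Rightarrow> 'a \<Rightarrow> bool"
    and c d :: "nat \<Rightarrow> 'a" and n :: nat
  assumes "slim_lattice TYPE('a)"
    and "semimodular_lattice TYPE('a)"
    and "lattice_length TYPE('a) n"
    and "planar_diagram r1 r2"
    and "left_boundary_chain r1 r2 n c"
    and "right_boundary_chain r1 r2 n d"
  shows "pi1 r1 r2 n c d = pi2 n c d \<and> pi2 n c d = pi3 n c d"
proof -
  interpret ssl r1 r2 c d n using assms by unfold_locales
  show ?thesis using pi1_eq pi2_eq pi3_eq by simp
qed

end
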